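(* Let $v\equiv 1$ or $7\pmod{24}$ and $n=\frac{v-1}{6}$. If a cyclic three-fold triple system CTS$(v,3)$ has fine structure $(c_1,c_2,c_3)$ with $c_2=t$ and $c_3=s$, then $0\le s\le n$ and $0\le t\le n-s$.
   Context: A cyclic $\lambda$-fold triple system CTS$(v,\lambda)$ is a multiset $\mathcal B$ of 3-element subsets (blocks) of $\mathbb Z_v$ such that every 2-element subset of $\mathbb Z_v$ is contained in exactly $\lambda$ blocks (counted with multiplicity), and $\mathcal B$ is invariant under the translation $x\mapsto x+1$. Thus $\mathcal B$ is a union of translation orbits of 3-subsets with multiplicities; a base block is an orbit representative. The fine structure is $(c_1,\ldots,c_\lambda)$, where $c_i$ is the number of distinct base blocks (orbits) occurring with multiplicity exactly $i$. *)

theory Defs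
  imports Main "HOL-Library.Multiset"
begin

text \<open>Z_v is modelled by {0..<v} with addition mod v; blocks are 3-subsets of {0..<v}.\<close>

definition shift :: "nat \<Rightarrow> nat set \<Rightarrow> nat set" where
  "shift v B = (\<lambda>x. (x + 1) mod v) ` B"

definition is_CTS :: "nat \<Rightarrow> nat \<Rightarrow> nat set multiset \<Rightarrow> bool" where
  "is_CTS v lam M \<longleftrightarrow>
     (\<forall>B \<in># M. B \<subseteq> {..<v} \<and> card B = 3) \<and>
     (\<forall>x y. x < v \<longrightarrow> y < v \<longrightarrow> x \<noteq> y \<longrightarrow>
        size (filter_mset (\<lambda>B. {x, y} \<subseteq> B) M) = lam) \<and>
     image_mset (shift v) M = M"

definition orbit :: "nat \<Rightarrow> nat set \<Rightarrow> nat set set" where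
  "orbit v B = {(shift v ^^ k) B | k. True}"

definition fine_c :: "nat \<Rightarrow> nat set multiset \<Rightarrow> nat \<Rightarrow> nat" where
  "fine_c v M i = card {orbit v B | B. B \<in># M \<and> count M B = i}"

end

theory Submission
  imports Defs "HOL-Computational_Algebra.Primes"
begin

definition T :: "nat \<Rightarrow> nat \<Rightarrow> nat set \<Rightarrow> nat set" where
  "T v k B = (\<lambda>x. (x + k) mod v) ` B"

lemma T_T: "T v j (T v k B) = T v (k + j) B"
  unfolding T_def image_image by (simp add: mod_add_left_eq add.assoc)

lemma T_mod: "T v k B = T v (k mod v) B"
  unfolding T_def by (simp add: mod_add_right_eq)

lemma T_0: assumes "B \<subseteq> {..<v}" shows "T v 0 B = B"
proof -
  have "T v 0 B = (\<lambda>x. x) ` B" unfolding T_def by (rule image_cong) (use assms in auto)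
  then show ?thesis by simp
qed

lemma T_sub: "0 < v \<Longrightarrow> T v k B \<subseteq> {..<v}" unfolding T_def by auto

lemma T_v: "B \<subseteq> {..<v} \<Longrightarrow> T v v B = B"
  by (metis T_0 T_mod mod_self)

lemma T_mem: "a \<in> B \<Longrightarrow> (a + k) mod v \<in> T v k B" unfolding T_def by auto

lemma shift_T: "shift v X = T v 1 X" unfolding shift_def T_def by simp

lemma shift_pow: "B \<subseteq> {..<v} \<Longrightarrow> (shift v ^^ k) B = T v k B"
proof (induction k)
  case 0 then show ?case by (simp add: T_0)
next
  case (Suc k) then show ?case by (simp add: shift_T T_T)
qed

lemma orbit_T: "B \<subseteq> {..<v} \<Longrightarrow> orbit v B = {T v k B | k. True}"
  unfolding orbit_def by (simp add: shift_pow)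

lemma shift_inj: assumes "0 < v" shows "inj_on (shift v) (Pow {..<v})"
proof
  fix X Y assume X: "X \<in> Pow {..<v}" and Y: "Y \<in> Pow {..<v}" and e: "shift v X = shift v Y"
  have "T v (v - 1) (T v 1 X) = T v (v - 1) (T v 1 Y)" using e by (simp add: shift_T)
  then have "T v v X = T v v Y" using assms by (simp add: T_T)
  then show "X = Y" using X Y by (simp add: T_v)
qed

lemma count_shift:
  assumes "is_CTS v lam M" "B \<subseteq> {..<v}" "0 < v"
  shows "count M (shift v B) = count M B"
proof -
  have sub: "set_mset M \<subseteq> Pow {..<v}" using assms(1) by (auto simp: is_CTS_def)
  have "count M (shift v B) = count (image_mset (shift v) M) (shift v B)"
    using assms(1) by (simp add: is_CTS_def)
  also have "\<dots> = sum (count M) (shift v -` {shift v B} \<inter> set_mset M)" by (rule count_image_mset)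
  also have "shift v -` {shift v B} \<inter> set_mset M = {B} \<inter> set_mset M"
    using shift_inj[OF assms(3)] sub assms(2) by (auto simp: inj_on_def)
  also have "sum (count M) ({B} \<inter> set_mset M) = count M B"
    by (cases "B \<in># M") (auto simp: not_in_iff)
  finally show ?thesis .
qed

lemma count_T:
  assumes "is_CTS v lam M" "B \<subseteq> {..<v}" "0 < v"
  shows "count M (T v k B) = count M B"
proof (induction k)
  case 0 then show ?case using assms by (simp add: T_0)
next
  case (Suc k)
  have "T v (Suc k) B = shift v (T v k B)" by (simp add: shift_T T_T)
  then show ?case using count_shift[OF assms(1) T_sub[OF assms(3)] assms(3)] Suc by simp
qed

lemma pair_bad:
  assumes "is_CTS v 3 M" "X \<noteq> Y" "count M X \<ge> 2" "count M Y \<ge> 2" "x < v" "y < v" "x \<noteq> y"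
    "{x,y} \<subseteq> X" "{x,y} \<subseteq> Y"
  shows False
proof -
  have "{#X,X,Y,Y#} \<subseteq># filter_mset (\<lambda>B. {x,y} \<subseteq> B) M"
    using assms by (auto simp: subseteq_mset_def)
  then have "size {#X,X,Y,Y#} \<le> size (filter_mset (\<lambda>B. {x,y} \<subseteq> B) M)"
    by (rule size_mset_mono)
  moreover have "size (filter_mset (\<lambda>B. {x,y} \<subseteq> B) M) = 3"
    using assms(1,5,6,7) unfolding is_CTS_def by blast
  ultimately show False by simp
qed

lemma T_mult_inv:
  assumes "T v d B = B" "B \<subseteq> {..<v}"
  shows "T v (j * d) B = B"
proof (induction j)
  case 0 then show ?case using assms(2) by (simp add: T_0)
next
  case (Suc j)
  have "T v (Suc j * d) B = T v d (T v (j * d) B)" by (simp add: T_T add.commute)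
  then show ?case using Suc assms(1) by simp
qed

lemma dvd_small:
  fixes v d k :: nat
  assumes "odd v" "\<not> 3 dvd v" "v dvd k * d" "k \<in> {1,2,3}"
  shows "v dvd d"
proof -
  have p3: "prime (3::nat)" by simp
  have "coprime 3 v" using prime_imp_coprime[OF p3 assms(2)] .
  then have "coprime v k" using assms(1,4)
    by (auto simp: coprime_commute)
  then show ?thesis using assms(3) by (simp add: coprime_dvd_mult_right_iff)
qed

lemma no_fix:
  assumes "odd v" "\<not> 3 dvd v" "T v d B = B" "0 < d" "d < v" "a \<in> B" "card B = 3" "B \<subseteq> {..<v}"
  shows False
proof -
  let ?f = "\<lambda>j. (a + j * d) mod v"
  have img: "?f ` {0..3} \<subseteq> B"
  proof
    fix x assume "x \<in> ?f ` {0..3}"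
    then obtain j where x: "x = ?f j" by auto
    have "x \<in> T v (j * d) B" using T_mem[OF assms(6)] x by simp
    then show "x \<in> B" using T_mult_inv[OF assms(3,8)] by simp
  qed
  have finB: "finite B" using assms(7) by (metis card.infinite zero_neq_numeral)
  have "\<not> inj_on ?f {0..3}"
  proof
    assume "inj_on ?f {0..3}"
    then have "card (?f ` {0..3}) = 4" by (simp add: card_image)
    moreover have "card (?f ` {0..3}) \<le> 3" using card_mono[OF finB img] assms(7) by simp
    ultimately show False by simp
  qed
  then obtain i j where ij: "i \<in> {0..3}" "j \<in> {0..3}" "i \<noteq> j" "?f i = ?f j"
    unfolding inj_on_def by blast
  have "\<exists>i j. i < j \<and> j \<le> 3 \<and> ?f i = ?f j"
  proof (cases "i < j")
    case True then show ?thesis using ij by auto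
  next
    case False then show ?thesis using ij by (intro exI[of _ j] exI[of _ i]) auto
  qed
  then obtain i j where ij2: "i < j" "j \<le> 3" "?f j = ?f i" by metis
  have "v dvd (a + j * d) - (a + i * d)"
    using ij2 mod_eq_dvd_iff_nat[of "a + i * d" "a + j * d" v] by simp
  moreover have "(a + j * d) - (a + i * d) = (j - i) * d" by (simp add: diff_mult_distrib)
  ultimately have "v dvd (j - i) * d" by simp
  moreover have "j - i \<in> {1,2,3}" using ij2 by auto
  ultimately have "v dvd d" using dvd_small assms(1,2) by blast
  then show False using assms(4,5) by (simp add: nat_dvd_not_less)
qed

lemma three_zero:
  assumes "B \<subseteq> {..<v}" "card B = 3" "odd v" "\<not> 3 dvd v"
  shows "3 \<le> card ({T v k B | k. True} \<inter> {X. 0 \<in> X})"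
proof -
  have v0: "0 < v" using assms(3) by (cases v) auto
  let ?g = "\<lambda>a. T v (v - a) B"
  have inj: "inj_on ?g B"
  proof
    fix a b assume a: "a \<in> B" and b: "b \<in> B" and e: "?g a = ?g b"
    show "a = b"
    proof (rule ccontr)
      assume ne: "a \<noteq> b"
      have av: "a < v" "b < v" using a b assms(1) by auto
      have "T v a (?g a) = T v v B" using av by (simp add: T_T)
      also have "\<dots> = B" using assms(1) by (simp add: T_v)
      finally have 1: "T v a (?g a) = B" .
      have "T v a (?g b) = T v (v - b + a) B" by (simp add: T_T)
      also have "\<dots> = T v ((v - b + a) mod v) B" by (rule T_mod)
      finally have "T v ((v - b + a) mod v) B = B" using 1 e by simp
      moreover have "(v - b + a) mod v \<noteq> 0"
      proof
        assume "(v - b + a) mod v = 0"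
        then have "v dvd (v - b + a)" by (simp add: mod_eq_0_iff_dvd)
        moreover have "0 < v - b + a" "v - b + a < 2 * v" using av by auto
        ultimately have "v - b + a = v"
          by (metis dvd_imp_le dvd_div_mult_self less_mult_imp_div_less mult_1 le_neq_implies_less div_less nat_neq_iff mult_0 one_less_numeral_iff semiring_norm(76) less_2_cases_iff)
        then show False using av ne by simp
      qed
      ultimately show False
        using no_fix[OF assms(3,4), of "(v - b + a) mod v" B a] a assms(1,2) v0 by simp
    qed
  qed
  have sub: "?g ` B \<subseteq> {T v k B | k. True} \<inter> {X. 0 \<in> X}"
  proof
    fix X assume "X \<in> ?g ` B"
    then obtain a where a: "a \<in> B" "X = ?g a" by auto
    have "(a + (v - a)) mod v \<in> X" using T_mem[OF a(1)] a(2) by simp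
    moreover have "a < v" using a assms(1) by auto
    ultimately show "X \<in> {T v k B | k. True} \<inter> {X. 0 \<in> X}" using a by auto
  qed
  have fin: "finite ({T v k B | k. True} \<inter> {X. 0 \<in> X})"
    by (rule finite_subset[of _ "Pow {..<v}"]) (use T_sub[OF v0] in auto)
  have "card (?g ` B) = 3" using card_image[OF inj] assms(2) by simp
  then show ?thesis using card_mono[OF fin sub] by simp
qed

lemma orbit_same:
  assumes "X \<in> {T v k B1 | k. True}" "0 < v"
  shows "{T v k B1 | k. True} = {T v k X | k. True}"
proof -
  obtain k1 where X: "X = T v k1 B1" using assms by auto
  obtain w where w: "v = Suc w" using assms(2) by (cases v) auto
  show ?thesis
  proof (rule set_eqI, rule iffI)
    fix Y assume "Y \<in> {T v k B1 | k. True}"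
    then obtain j where Y: "Y = T v j B1" by auto
    have "T v j B1 = T v ((j + v * k1) mod v) B1" by (metis T_mod mod_mult_self2)
    also have "\<dots> = T v (j + v * k1) B1" by (rule T_mod[symmetric])
    also have "\<dots> = T v (j + w * k1) X" unfolding X T_T by (simp add: w algebra_simps)
    finally show "Y \<in> {T v k X | k. True}" using Y by auto
  next
    fix Y assume "Y \<in> {T v k X | k. True}"
    then obtain j where "Y = T v j X" by auto
    then have "Y = T v (k1 + j) B1" by (simp add: X T_T)
    then show "Y \<in> {T v k B1 | k. True}" by auto
  qed
qed

theorem mainTheorem7:
  fixes v n s t :: nat and M :: "nat set multiset"
  assumes "v mod 24 = 1 \<or> v mod 24 = 7"
    and "n = (v - 1) div 6"
    and "is_CTS v 3 M"
    and "fine_c v M 2 = t"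
    and "fine_c v M 3 = s"
  shows "0 \<le> s \<and> s \<le> n \<and> 0 \<le> t \<and> t \<le> n - s"
proof -
  have odd: "odd v" and n3: "\<not> 3 dvd v" and v0: "0 < v" using assms(1) by presburger+
  have blk: "\<And>B. B \<in># M \<Longrightarrow> B \<subseteq> {..<v} \<and> card B = 3" using assms(3) by (auto simp: is_CTS_def)
  define Ob where "Ob B = {T v k B | k. True}" for B
  have orb: "\<And>B. B \<in># M \<Longrightarrow> orbit v B = Ob B" using blk by (simp add: orbit_T Ob_def)
  define S where "S i = {Ob B | B. B \<in># M \<and> count M B = i}" for i :: nat
  have fc: "fine_c v M i = card (S i)" for i
  proof -
    have "{orbit v B | B. B \<in># M \<and> count M B = i} = S i" unfolding S_def using orb by metis
    then show ?thesis by (simp add: fine_c_def)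
  qed
  have finS: "finite (S i)" for i
  proof (rule finite_subset[of _ "Pow (Pow {..<v})"])
    show "S i \<subseteq> Pow (Pow {..<v})" unfolding S_def Ob_def using T_sub[OF v0] by auto
  qed simp
  have cntOb: "\<And>B X. B \<in># M \<Longrightarrow> X \<in> Ob B \<Longrightarrow> count M X = count M B"
    unfolding Ob_def using count_T[OF assms(3) _ v0] blk by auto
  have disj23: "S 2 \<inter> S 3 = {}"
  proof (rule ccontr)
    assume "S 2 \<inter> S 3 \<noteq> {}"
    then obtain B B' where B: "B \<in># M" "count M B = 2" and B': "B' \<in># M" "count M B' = 3"
      and e: "Ob B = Ob B'" unfolding S_def by auto
    have "B' \<in> Ob B'" unfolding Ob_def using T_0 blk[OF B'(1)] by (metis (mono_tags, lifting) mem_Collect_eq)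
    then have "B' \<in> Ob B" using e by simp
    then show False using cntOb[OF B(1)] B B' by simp
  qed
  define SS where "SS = S 2 \<union> S 3"
  have st: "s + t = card SS" unfolding SS_def
    using card_Un_disjoint[OF finS finS disj23] assms(4,5) fc by simp
  define D where "D = {X. X \<in># M \<and> 2 \<le> count M X \<and> 0 \<in> X}"
  have finD: "finite D" by (rule finite_subset[of _ "set_mset M"]) (auto simp: D_def)
  define Z where "Z Q = Q \<inter> {X. 0 \<in> X}" for Q :: "nat set set"
  have SSrep: "\<And>Q. Q \<in> SS \<Longrightarrow> \<exists>B. B \<in># M \<and> 2 \<le> count M B \<and> Q = Ob B"
    unfolding SS_def S_def by auto
  have Z3: "3 \<le> card (Z Q)" if QS: "Q \<in> SS" for Q
  proof -
    obtain B where B: "B \<in># M" "Q = Ob B" using SSrep[OF QS] by blast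
    show ?thesis unfolding Z_def B(2) Ob_def using three_zero[OF _ _ odd n3] blk[OF B(1)] by blast
  qed
  have ZD: "\<Union>(Z ` SS) \<subseteq> D"
  proof
    fix X assume "X \<in> \<Union>(Z ` SS)"
    then obtain Q where Q: "Q \<in> SS" "X \<in> Q" "0 \<in> X" unfolding Z_def by auto
    obtain B where B: "B \<in># M" "2 \<le> count M B" "Q = Ob B" using SSrep[OF Q(1)] by blast
    have "count M X = count M B" using cntOb[OF B(1)] Q B by simp
    then have "X \<in># M" using B(2) by (metis count_eq_zero_iff not_numeral_le_zero)
    then show "X \<in> D" using B Q \<open>count M X = count M B\<close> by (auto simp: D_def)
  qed
  have Zdisj: "\<forall>Q1\<in>SS. \<forall>Q2\<in>SS. Q1 \<noteq> Q2 \<longrightarrow> Z Q1 \<inter> Z Q2 = {}"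
  proof (intro ballI impI)
    fix Q1 Q2 assume Q: "Q1 \<in> SS" "Q2 \<in> SS" "Q1 \<noteq> Q2"
    obtain B1 where B1: "Q1 = Ob B1" using SSrep[OF Q(1)] by blast
    obtain B2 where B2: "Q2 = Ob B2" using SSrep[OF Q(2)] by blast
    show "Z Q1 \<inter> Z Q2 = {}"
    proof (rule ccontr)
      assume "Z Q1 \<inter> Z Q2 \<noteq> {}"
      then obtain X where X1: "X \<in> Ob B1" and X2: "X \<in> Ob B2" unfolding Z_def B1 B2 by auto
      have "Ob B1 = Ob X" using orbit_same[OF X1[unfolded Ob_def] v0] unfolding Ob_def .
      moreover have "Ob B2 = Ob X" using orbit_same[OF X2[unfolded Ob_def] v0] unfolding Ob_def .
      ultimately show False using Q B1 B2 by simp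
    qed
  qed
  have finSS: "finite SS" unfolding SS_def using finS by simp
  have finZ: "\<forall>Q\<in>SS. finite (Z Q)"
  proof
    fix Q assume "Q \<in> SS"
    then obtain B where "Q = Ob B" using SSrep by blast
    have "Q \<subseteq> Pow {..<v}" unfolding \<open>Q = Ob B\<close> Ob_def using T_sub[OF v0] by blast
    then show "finite (Z Q)" unfolding Z_def by (meson finite_Int finite_Pow_iff finite_lessThan finite_subset)
  qed
  have "3 * card SS = (\<Sum>Q\<in>SS. 3)" by simp
  also have "\<dots> \<le> (\<Sum>Q\<in>SS. card (Z Q))" by (rule sum_mono) (rule Z3)
  also have "\<dots> = card (\<Union>(Z ` SS))" using card_UN_disjoint[OF finSS finZ Zdisj] by simp
  also have "\<dots> \<le> card D" by (rule card_mono[OF finD ZD])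
  finally have c1: "3 * card SS \<le> card D" .
  define A where "A X = X - {0}" for X :: "nat set"
  have A2: "card (A X) = 2" if XD: "X \<in> D" for X
  proof -
    have "card X = 3" "0 \<in> X" using XD blk unfolding D_def by auto
    then show ?thesis unfolding A_def by (simp add: card_Diff_singleton)
  qed
  have Adisj: "\<forall>X\<in>D. \<forall>Y\<in>D. X \<noteq> Y \<longrightarrow> A X \<inter> A Y = {}"
  proof (intro ballI impI)
    fix X Y assume XY: "X \<in> D" "Y \<in> D" "X \<noteq> Y"
    show "A X \<inter> A Y = {}"
    proof (rule ccontr)
      assume "A X \<inter> A Y \<noteq> {}"
      then obtain y where y: "y \<in> X" "y \<in> Y" "y \<noteq> 0" unfolding A_def by auto
      have "y < v" using y XY blk unfolding D_def by auto
      moreover have "2 \<le> count M X" "2 \<le> count M Y" "0 \<in> X" "0 \<in> Y"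
        using XY(1,2) unfolding D_def by auto
      ultimately show False using pair_bad[OF assms(3) XY(3), of 0 y] y v0 by simp
    qed
  qed
  have finA: "\<forall>X\<in>D. finite (A X)"
  proof
    fix X assume "X \<in> D"
    then have "X \<subseteq> {..<v}" using blk unfolding D_def by simp
    then show "finite (A X)" unfolding A_def using finite_subset by blast
  qed
  have "2 * card D = (\<Sum>X\<in>D. card (A X))" using A2 by simp
  also have "\<dots> = card (\<Union>(A ` D))" using card_UN_disjoint[OF finD finA Adisj] by simp
  also have "\<dots> \<le> card {1..<v}"
  proof (rule card_mono)
    show "\<Union>(A ` D) \<subseteq> {1..<v}"
    proof
      fix y assume "y \<in> \<Union>(A ` D)"
      then obtain X where X: "X \<in> D" "y \<in> X" "y \<noteq> 0" unfolding A_def by auto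
      have "X \<subseteq> {..<v}" using X(1) blk unfolding D_def by simp
      then show "y \<in> {1..<v}" using X by auto
    qed
  qed simp
  finally have c2: "2 * card D \<le> v - 1" by simp
  have "6 * (s + t) \<le> v - 1" using c1 c2 st by simp
  then have "s + t \<le> n" using assms(2) by (simp add: less_eq_div_iff_mult_less_eq mult.commute)
  then show ?thesis by linarith
qed

end
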